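(* Let $d$ be a positive integer and suppose that there is a function $\varepsilon:\mathbb{N}\to\mathbb{R}$ with $\varepsilon(N)\to0$ such that for every $d$--regular bipartite graph $G$ on $2n$ vertices and every $0\leq k\leq n$ one has $\frac{\ln m_k(G)}{v(G)}\geq\mathcal{G}_d(k/n)-\varepsilon(v(G))$. Then for every $d$--regular bipartite graph $G$ on $v(G)=2n$ vertices and every integer $0\leq k\leq n$, $$\frac{\ln m_k(G)}{v(G)}\geq\mathcal{G}_d(p)-\frac{\ln v(G)}{v(G)},\qquad p=\frac kn.$$
   Context: $m_k(G)$ is the number of matchings of size $k$ in $G$. $\mathcal{G}_d(p)=\frac{1}{2}\left(p\ln\frac{d}{p}+(d-p)\ln\left(1-\frac{p}{d}\right)-2(1-p)\ln(1-p)\right)$ for $0\leq p\leq1$, with $0\ln(\cdot)=0$. *)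

theory Defs
  imports Complex_Main
begin

definition simple_graph :: "'a set \<Rightarrow> 'a set set \<Rightarrow> bool" where
  "simple_graph V E \<longleftrightarrow> finite V \<and> (\<forall>e\<in>E. e \<subseteq> V \<and> card e = 2)"

definition degree :: "'a set set \<Rightarrow> 'a \<Rightarrow> nat" where
  "degree E v = card {e\<in>E. v \<in> e}"

definition regular :: "nat \<Rightarrow> 'a set \<Rightarrow> 'a set set \<Rightarrow> bool" where
  "regular d V E \<longleftrightarrow> (\<forall>v\<in>V. degree E v = d)"

definition bipartite :: "'a set \<Rightarrow> 'a set set \<Rightarrow> bool" where
  "bipartite V E \<longleftrightarrow> (\<exists>A B. A \<union> B = V \<and> A \<inter> B = {} \<and>
      (\<forall>e\<in>E. \<exists>a\<in>A. \<exists>b\<in>B. e = {a, b}))"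

definition matching :: "'a set set \<Rightarrow> 'a set set \<Rightarrow> bool" where
  "matching E M \<longleftrightarrow> M \<subseteq> E \<and> (\<forall>e\<in>M. \<forall>f\<in>M. e \<noteq> f \<longrightarrow> e \<inter> f = {})"

definition num_matchings :: "'a set set \<Rightarrow> nat \<Rightarrow> nat" where
  "num_matchings E k = card {M. matching E M \<and> card M = k}"

definition xln :: "real \<Rightarrow> real \<Rightarrow> real" where
  "xln t s = (if t = 0 then 0 else t * ln s)"

definition GG :: "nat \<Rightarrow> real \<Rightarrow> real" where
  "GG d p = (1/2) * (xln p (real d / p) + xln (real d - p) (1 - p / real d)
                     - 2 * xln (1 - p) (1 - p))"

end

theory Submission
  imports Defs "HOL-Library.Nat_Bijection"
begin


definition mt :: "'a set set \<Rightarrow> bool" where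
  "mt X \<longleftrightarrow> (\<forall>e\<in>X. \<forall>f\<in>X. e \<noteq> f \<longrightarrow> e \<inter> f = {})"

primrec reach :: "'a set set \<Rightarrow> 'a set \<Rightarrow> nat \<Rightarrow> 'a set set" where
  "reach S e 0 = {e}"
| "reach S e (Suc n) = reach S e n \<union> {g\<in>S. \<exists>f\<in>reach S e n. f \<inter> g \<noteq> {}}"

definition ecomp :: "'a set set \<Rightarrow> 'a set \<Rightarrow> 'a set set" where
  "ecomp S e = (\<Union>n. reach S e n)"

definition closedS :: "'a set set \<Rightarrow> 'a set set \<Rightarrow> bool" where
  "closedS S U \<longleftrightarrow> (\<forall>e\<in>S. \<forall>f\<in>S. e \<inter> f \<noteq> {} \<longrightarrow> (e\<in>U \<longleftrightarrow> f\<in>U))"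

lemma reach_sub: "e \<in> S \<Longrightarrow> reach S e n \<subseteq> S"
  by (induction n) auto

lemma comp_sub: "e \<in> S \<Longrightarrow> ecomp S e \<subseteq> S"
  using reach_sub unfolding ecomp_def by blast

lemma comp_self: "e \<in> ecomp S e"
  unfolding ecomp_def using reach.simps(1) by blast

lemma comp_closed: "f \<in> ecomp S e \<Longrightarrow> g \<in> S \<Longrightarrow> f \<inter> g \<noteq> {} \<Longrightarrow> g \<in> ecomp S e"
  unfolding ecomp_def
proof -
  assume "f \<in> (\<Union>n. reach S e n)" "g \<in> S" "f \<inter> g \<noteq> {}"
  then obtain n where "f \<in> reach S e n" by blast
  then have "g \<in> reach S e (Suc n)" using \<open>g\<in>S\<close> \<open>f \<inter> g \<noteq> {}\<close> by auto
  then show "g \<in> (\<Union>n. reach S e n)" by blast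
qed

lemma reach_inv:
  assumes "closedS S U" "e \<in> S"
  shows "f \<in> reach S e n \<Longrightarrow> (f \<in> U \<longleftrightarrow> e \<in> U)"
proof (induction n arbitrary: f)
  case 0 then show ?case by simp
next
  case (Suc n)
  show ?case
  proof (cases "f \<in> reach S e n")
    case True then show ?thesis using Suc by blast
  next
    case False
    then obtain g where g: "g \<in> reach S e n" "g \<inter> f \<noteq> {}" "f \<in> S" using Suc.prems by auto
    have "g \<in> S" using reach_sub[OF assms(2)] g(1) by blast
    then have "f \<in> U \<longleftrightarrow> g \<in> U" using assms(1) g unfolding closedS_def by blast
    then show ?thesis using Suc.IH g(1) by blast
  qed
qed

lemma comp_inv: "closedS S U \<Longrightarrow> e \<in> S \<Longrightarrow> f \<in> ecomp S e \<Longrightarrow> (f \<in> U \<longleftrightarrow> e \<in> U)"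
  unfolding ecomp_def using reach_inv by blast

lemma closedS_comp: "e \<in> S \<Longrightarrow> closedS S (ecomp S e)"
  unfolding closedS_def using comp_closed by (metis inf_commute)

lemma comp_eq: assumes "e \<in> S" "g \<in> ecomp S e" shows "ecomp S g = ecomp S e"
proof -
  have gS: "g \<in> S" using comp_sub assms by blast
  have "e \<in> ecomp S g" using comp_inv[OF closedS_comp[OF gS] assms(1) assms(2)] comp_self by blast
  have 1: "ecomp S e \<subseteq> ecomp S g"
    using comp_inv[OF closedS_comp[OF gS] assms(1)] \<open>e \<in> ecomp S g\<close> by blast
  have 2: "ecomp S g \<subseteq> ecomp S e"
    using comp_inv[OF closedS_comp[OF assms(1)] gS] assms(2) by blast
  show ?thesis using 1 2 by blast
qed

lemma comp_disj: assumes "e \<in> S" "g \<in> S" "ecomp S e \<inter> ecomp S g \<noteq> {}" shows "ecomp S e = ecomp S g"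
proof -
  obtain x where "x \<in> ecomp S e" "x \<in> ecomp S g" using assms(3) by blast
  then show ?thesis using comp_eq assms by metis
qed

lemma closed_union: assumes "closedS S U" "U \<subseteq> S" shows "U = \<Union>(ecomp S ` U)"
proof
  show "U \<subseteq> \<Union>(ecomp S ` U)" using comp_self by blast
  show "\<Union>(ecomp S ` U) \<subseteq> U"
    using comp_inv[OF assms(1)] assms(2) by blast
qed

lemma reach_mono: "m \<le> n \<Longrightarrow> reach S e m \<subseteq> reach S e n"
proof (induction n)
  case 0 then show ?case by simp
next
  case (Suc n) then show ?case by (cases "m = Suc n") auto
qed

lemma reach_bound:
  assumes "e \<in> S" "\<forall>x\<in>S. card x = 2" "finite S"
  shows "card (\<Union>(reach S e n)) \<le> card (reach S e n) + 1"
proof (induction n)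
  case 0 then show ?case using assms by simp
next
  case (Suc n)
  define R where "R = reach S e n"
  define New where "New = reach S e (Suc n) - R"
  have fR: "finite R" using reach_sub[OF assms(1)] assms(3) R_def finite_subset by blast
  have fN: "finite New" using reach_sub[OF assms(1), of "Suc n"] assms(3) New_def finite_subset by blast
  have Ufin: "finite (\<Union>R)" using fR R_def reach_sub[OF assms(1)] assms(2)
    by (metis card.infinite finite_Union subset_iff zero_neq_numeral)
  have sub: "\<Union>(reach S e (Suc n)) \<subseteq> \<Union>R \<union> (\<Union>g\<in>New. g - \<Union>R)"
    unfolding New_def R_def by blast
  have le1: "card (g - \<Union>R) \<le> 1" if "g \<in> New" for g
  proof -
    have gS: "g \<in> S" and "\<exists>f\<in>R. f \<inter> g \<noteq> {}" using that unfolding New_def R_def by auto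
    then obtain x where x: "x \<in> g" "x \<in> \<Union>R" by blast
    have "card g = 2" using assms(2) gS by blast
    then have "finite g" using card.infinite by fastforce
    have "g - \<Union>R \<subseteq> g - {x}" using x by blast
    then have "card (g - \<Union>R) \<le> card (g - {x})" using \<open>finite g\<close> by (simp add: card_mono)
    also have "\<dots> = 1" using \<open>card g = 2\<close> x(1) \<open>finite g\<close> by simp
    finally show ?thesis .
  qed
  have "card (\<Union>(reach S e (Suc n))) \<le> card (\<Union>R \<union> (\<Union>g\<in>New. g - \<Union>R))"
  proof (rule card_mono)
    have "\<forall>g\<in>New. finite g" unfolding New_def using reach_sub[OF assms(1), of "Suc n"] assms(2)
      by (metis Diff_iff card.infinite subset_iff zero_neq_numeral)
    then show "finite (\<Union>R \<union> (\<Union>g\<in>New. g - \<Union>R))" using Ufin fN by blast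
  qed (use sub in blast)
  also have "\<dots> \<le> card (\<Union>R) + card (\<Union>g\<in>New. g - \<Union>R)" by (rule card_Un_le)
  also have "card (\<Union>g\<in>New. g - \<Union>R) \<le> (\<Sum>g\<in>New. card (g - \<Union>R))" by (rule card_UN_le[OF fN])
  also have "\<dots> \<le> (\<Sum>g\<in>New. 1)" by (rule sum_mono) (use le1 in auto)
  also have "\<dots> = card New" by simp
  finally have A: "card (\<Union>(reach S e (Suc n))) \<le> card (\<Union>R) + card New" by simp
  have "card (reach S e (Suc n)) = card R + card New"
  proof -
    have "reach S e (Suc n) = R \<union> New" "R \<inter> New = {}" unfolding New_def R_def using reach_mono[of n "Suc n"] by auto
    then show ?thesis using fR fN card_Un_disjoint by metis
  qed
  then show ?case using A Suc.IH unfolding R_def by linarith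
qed

lemma comp_finite: "e \<in> S \<Longrightarrow> finite S \<Longrightarrow> finite (ecomp S e)"
  using comp_sub finite_subset by blast

lemma comp_reach: assumes "e \<in> S" "finite S" shows "\<exists>N. ecomp S e = reach S e N"
proof -
  have "\<forall>f\<in>ecomp S e. \<exists>n. f \<in> reach S e n" unfolding ecomp_def by blast
  then obtain nf where nf: "\<forall>f\<in>ecomp S e. f \<in> reach S e (nf f)" by metis
  define N where "N = Max (nf ` ecomp S e)"
  have "ecomp S e \<subseteq> reach S e N"
  proof
    fix f assume f: "f \<in> ecomp S e"
    have "nf f \<le> N" unfolding N_def using f comp_finite[OF assms] by simp
    then show "f \<in> reach S e N" using reach_mono nf f by blast
  qed
  moreover have "reach S e N \<subseteq> ecomp S e" unfolding ecomp_def by blast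
  ultimately show ?thesis by blast
qed

lemma comp_bound:
  assumes "e \<in> S" "\<forall>x\<in>S. card x = 2" "finite S"
  shows "card (\<Union>(ecomp S e)) \<le> card (ecomp S e) + 1"
  using comp_reach[OF assms(1,3)] reach_bound[OF assms] by metis




definition sd :: "'a set \<Rightarrow> 'a set \<Rightarrow> 'a set" where
  "sd A B = (A - B) \<union> (B - A)"

lemma sd_sd: "sd A (sd A B) = B" unfolding sd_def by blast

definition Spl :: "'a set set \<Rightarrow> 'a set set set" where
  "Spl S = {X. X \<subseteq> S \<and> mt X \<and> mt (S - X)}"

lemma spl_closed: assumes "X0 \<in> Spl S" "X \<in> Spl S" shows "closedS S (sd X0 X)"
  unfolding closedS_def
proof (intro ballI impI)
  fix e f assume ef: "e \<in> S" "f \<in> S" "e \<inter> f \<noteq> {}"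
  show "e \<in> sd X0 X \<longleftrightarrow> f \<in> sd X0 X"
  proof (cases "e = f")
    case True then show ?thesis by simp
  next
    case False
    have "(e \<in> X0) \<noteq> (f \<in> X0)" using assms(1) ef False unfolding Spl_def mt_def by blast
    moreover have "(e \<in> X) \<noteq> (f \<in> X)" using assms(2) ef False unfolding Spl_def mt_def by blast
    ultimately show ?thesis unfolding sd_def by blast
  qed
qed

lemma flip_spl: assumes "X0 \<in> Spl S" "closedS S U" "U \<subseteq> S" shows "sd X0 U \<in> Spl S"
proof -
  have X0: "X0 \<subseteq> S" "mt X0" "mt (S - X0)" using assms(1) unfolding Spl_def by auto
  have "mt (sd X0 U)" unfolding mt_def
  proof (intro ballI impI)
    fix e f assume ef: "e \<in> sd X0 U" "f \<in> sd X0 U" "e \<noteq> f"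
    show "e \<inter> f = {}"
    proof (rule ccontr)
      assume ne: "e \<inter> f \<noteq> {}"
      have S: "e \<in> S" "f \<in> S" using ef X0 assms(3) unfolding sd_def by auto
      have "e \<in> U \<longleftrightarrow> f \<in> U" using assms(2) S ne unfolding closedS_def by blast
      then show False using ef ne X0(2,3) S unfolding sd_def mt_def by blast
    qed
  qed
  moreover have "mt (S - sd X0 U)" unfolding mt_def
  proof (intro ballI impI)
    fix e f assume ef: "e \<in> S - sd X0 U" "f \<in> S - sd X0 U" "e \<noteq> f"
    show "e \<inter> f = {}"
    proof (rule ccontr)
      assume ne: "e \<inter> f \<noteq> {}"
      have S: "e \<in> S" "f \<in> S" using ef by auto
      have "e \<in> U \<longleftrightarrow> f \<in> U" using assms(2) S ne unfolding closedS_def by blast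
      then show False using ef ne X0(2,3) S unfolding sd_def mt_def by blast
    qed
  qed
  moreover have "sd X0 U \<subseteq> S" using X0 assms(3) unfolding sd_def by auto
  ultimately show ?thesis unfolding Spl_def by auto
qed

definition Qc :: "'a set set \<Rightarrow> 'a set set set" where
  "Qc S = ecomp S ` S"

lemma UF_closed: assumes "F \<subseteq> Qc S" shows "closedS S (\<Union>F)" "\<Union>F \<subseteq> S"
proof -
  show "closedS S (\<Union>F)" unfolding closedS_def
  proof (intro ballI impI)
    fix e f assume ef: "e \<in> S" "f \<in> S" "e \<inter> f \<noteq> {}"
    show "e \<in> \<Union>F \<longleftrightarrow> f \<in> \<Union>F"
    proof
      assume "e \<in> \<Union>F"
      then obtain x where "x \<in> S" "ecomp S x \<in> F" "e \<in> ecomp S x" using assms unfolding Qc_def by blast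
      then show "f \<in> \<Union>F" using comp_closed ef by blast
    next
      assume "f \<in> \<Union>F"
      then obtain x where "x \<in> S" "ecomp S x \<in> F" "f \<in> ecomp S x" using assms unfolding Qc_def by blast
      then show "e \<in> \<Union>F" using comp_closed ef by (metis inf_commute UnionI)
    qed
  qed
  show "\<Union>F \<subseteq> S" using assms comp_sub unfolding Qc_def by blast
qed

lemma Q_disj: "K \<in> Qc S \<Longrightarrow> K' \<in> Qc S \<Longrightarrow> K \<noteq> K' \<Longrightarrow> K \<inter> K' = {}"
  unfolding Qc_def using comp_disj by blast

lemma F_recover: assumes "F \<subseteq> Qc S" shows "F = {K\<in>Qc S. K \<subseteq> \<Union>F}"
proof
  show "F \<subseteq> {K\<in>Qc S. K \<subseteq> \<Union>F}" using assms by blast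
  show "{K\<in>Qc S. K \<subseteq> \<Union>F} \<subseteq> F"
  proof
    fix K assume K: "K \<in> {K\<in>Qc S. K \<subseteq> \<Union>F}"
    then obtain e where e: "e \<in> S" "K = ecomp S e" unfolding Qc_def by blast
    then have "e \<in> \<Union>F" using K comp_self by blast
    then obtain K' where "K' \<in> F" "e \<in> K'" by blast
    then have "K' = K" using Q_disj[of K' S K] assms e K comp_self by blast
    then show "K \<in> F" using \<open>K' \<in> F\<close> by simp
  qed
qed

lemma psi_bij: assumes "X0 \<in> Spl S"
  shows "bij_betw (\<lambda>F. sd X0 (\<Union>F)) (Pow (Qc S)) (Spl S)"
  unfolding bij_betw_def
proof (intro conjI)
  show "inj_on (\<lambda>F. sd X0 (\<Union>F)) (Pow (Qc S))"
  proof (rule inj_onI)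
    fix F G assume FG: "F \<in> Pow (Qc S)" "G \<in> Pow (Qc S)" "sd X0 (\<Union>F) = sd X0 (\<Union>G)"
    then have "sd X0 (sd X0 (\<Union>F)) = sd X0 (sd X0 (\<Union>G))" by simp
    then have "\<Union>F = \<Union>G" by (simp only: sd_sd)
    moreover have "F = {K\<in>Qc S. K \<subseteq> \<Union>F}" using F_recover FG(1) by blast
    moreover have "G = {K\<in>Qc S. K \<subseteq> \<Union>G}" using F_recover FG(2) by blast
    ultimately show "F = G" by simp
  qed
  show "(\<lambda>F. sd X0 (\<Union>F)) ` Pow (Qc S) = Spl S"
  proof
    show "(\<lambda>F. sd X0 (\<Union>F)) ` Pow (Qc S) \<subseteq> Spl S"
    proof
      fix X assume "X \<in> (\<lambda>F. sd X0 (\<Union>F)) ` Pow (Qc S)"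
      then obtain F where F: "F \<subseteq> Qc S" "X = sd X0 (\<Union>F)" by blast
      show "X \<in> Spl S" using flip_spl[OF assms UF_closed[OF F(1)]] F(2) by simp
    qed
    show "Spl S \<subseteq> (\<lambda>F. sd X0 (\<Union>F)) ` Pow (Qc S)"
    proof
      fix X assume X: "X \<in> Spl S"
      define U where "U = sd X0 X"
      have cl: "closedS S U" using spl_closed[OF assms X] U_def by simp
      have US: "U \<subseteq> S" using assms X unfolding U_def sd_def Spl_def by auto
      have "U = \<Union>(ecomp S ` U)" using closed_union[OF cl US] .
      moreover have "ecomp S ` U \<subseteq> Qc S" using US unfolding Qc_def by blast
      moreover have "X = sd X0 U" unfolding U_def by (simp only: sd_sd)
      ultimately show "X \<in> (\<lambda>F. sd X0 (\<Union>F)) ` Pow (Qc S)"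
        by (intro image_eqI[where x = "ecomp S ` U"]) auto
    qed
  qed
qed

lemma Q_finite: "finite S \<Longrightarrow> finite (Qc S)" unfolding Qc_def by simp

lemma Q_sub: "K \<in> Qc S \<Longrightarrow> K \<subseteq> S" unfolding Qc_def using comp_sub by blast

lemma card_identity:
  assumes fin: "finite S" and X0S: "X0 \<subseteq> S" and F: "F \<subseteq> Qc S"
  shows "card (sd X0 (\<Union>F)) + (\<Sum>K\<in>F. card (K \<inter> X0)) = card X0 + (\<Sum>K\<in>F. card (K - X0))"
proof -
  have fF: "finite F" using finite_subset[OF F Q_finite[OF fin]] .
  have fK: "\<forall>K\<in>F. finite K" using F Q_sub fin by (meson rev_finite_subset subsetD)
  have disj: "\<forall>i\<in>F. \<forall>j\<in>F. i \<noteq> j \<longrightarrow> i \<inter> j = {}" using F Q_disj by blast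
  have fX0: "finite X0" using finite_subset[OF X0S fin] .
  have fU: "finite (\<Union>F)" using fF fK by simp
  have 1: "card (sd X0 (\<Union>F)) = card (X0 - \<Union>F) + card (\<Union>F - X0)"
    unfolding sd_def by (rule card_Un_disjoint) (use fX0 fU in blast)+
  have 2: "card (X0 - \<Union>F) + card (X0 \<inter> \<Union>F) = card X0"
    using card_Int_Diff[OF fX0, of "\<Union>F"] by simp
  have 3: "card (X0 \<inter> \<Union>F) = (\<Sum>K\<in>F. card (K \<inter> X0))"
  proof -
    have "X0 \<inter> \<Union>F = (\<Union>K\<in>F. K \<inter> X0)" by blast
    moreover have "card (\<Union>K\<in>F. K \<inter> X0) = (\<Sum>K\<in>F. card (K \<inter> X0))"
    proof (rule card_UN_disjoint[OF fF])
      show "\<forall>K\<in>F. finite (K \<inter> X0)" using fK by blast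
      show "\<forall>i\<in>F. \<forall>j\<in>F. i \<noteq> j \<longrightarrow> (i \<inter> X0) \<inter> (j \<inter> X0) = {}" using disj by blast
    qed
    ultimately show ?thesis by simp
  qed
  have 4: "card (\<Union>F - X0) = (\<Sum>K\<in>F. card (K - X0))"
  proof -
    have "\<Union>F - X0 = (\<Union>K\<in>F. K - X0)" by blast
    moreover have "card (\<Union>K\<in>F. K - X0) = (\<Sum>K\<in>F. card (K - X0))"
    proof (rule card_UN_disjoint[OF fF])
      show "\<forall>K\<in>F. finite (K - X0)" using fK by blast
      show "\<forall>i\<in>F. \<forall>j\<in>F. i \<noteq> j \<longrightarrow> (i - X0) \<inter> (j - X0) = {}" using disj by blast
    qed
    ultimately show ?thesis by simp
  qed
  show ?thesis using 1 2 3 4 by linarith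
qed

lemma mt_card_union:
  assumes "mt X" "finite X" "\<forall>x\<in>X. card x = 2"
  shows "card (\<Union>X) = 2 * card X"
proof -
  have "card (\<Union>X) = (\<Sum>x\<in>X. card x)"
  proof -
    have "\<forall>x\<in>X. finite x" using assms(3) by (metis card.infinite zero_neq_numeral)
    then have "card (\<Union>x\<in>X. x) = (\<Sum>x\<in>X. card x)"
      using card_UN_disjoint[of X "\<lambda>x. x"] assms(1,2) unfolding mt_def by blast
    then show ?thesis by simp
  qed
  also have "\<dots> = 2 * card X" using assms(3) by simp
  finally show ?thesis .
qed

lemma comp_delta_le:
  assumes fin: "finite S" and c2: "\<forall>x\<in>S. card x = 2" and X0: "X0 \<in> Spl S" and K: "K \<in> Qc S"
  shows "card (K \<inter> X0) \<le> card (K - X0) + 1"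
proof -
  obtain e where e: "e \<in> S" "K = ecomp S e" using K unfolding Qc_def by blast
  have fK: "finite K" using Q_sub[OF K] fin by (rule finite_subset)
  have "mt (K \<inter> X0)" using X0 unfolding Spl_def mt_def by blast
  moreover have "\<forall>x\<in>K \<inter> X0. card x = 2" using c2 Q_sub[OF K] by blast
  ultimately have "card (\<Union>(K \<inter> X0)) = 2 * card (K \<inter> X0)" using mt_card_union fK by blast
  moreover have "card (\<Union>(K \<inter> X0)) \<le> card (\<Union>K)"
  proof (rule card_mono)
    show "finite (\<Union>K)" using fK c2 Q_sub[OF K] by (metis card.infinite finite_Union subset_iff zero_neq_numeral)
  qed blast
  moreover have "card (\<Union>K) \<le> card K + 1" using comp_bound[OF e(1) c2 fin] e(2) by simp
  moreover have "card K = card (K \<inter> X0) + card (K - X0)"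
    using fK by (metis card_Int_Diff)
  ultimately show ?thesis by linarith
qed

lemma count_subsets:
  assumes "finite Q" "P \<subseteq> Q"
  shows "card {F. F \<subseteq> Q \<and> card (F \<inter> P) = r} = (card P choose r) * 2 ^ card (Q - P)"
proof -
  have "bij_betw (\<lambda>F. (F \<inter> P, F - P)) {F. F \<subseteq> Q \<and> card (F \<inter> P) = r}
          ({G. G \<subseteq> P \<and> card G = r} \<times> Pow (Q - P))"
  proof (rule bij_betw_byWitness[where f' = "\<lambda>(G,H). G \<union> H"])
    show "\<forall>a\<in>{F. F \<subseteq> Q \<and> card (F \<inter> P) = r}. (\<lambda>(G, H). G \<union> H) (a \<inter> P, a - P) = a" by auto
    show "\<forall>a'\<in>{G. G \<subseteq> P \<and> card G = r} \<times> Pow (Q - P). (\<lambda>F. (F \<inter> P, F - P)) ((\<lambda>(G, H). G \<union> H) a') = a'"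
      by auto
    show "(\<lambda>F. (F \<inter> P, F - P)) ` {F. F \<subseteq> Q \<and> card (F \<inter> P) = r} \<subseteq> {G. G \<subseteq> P \<and> card G = r} \<times> Pow (Q - P)"
      by auto
    show "(\<lambda>(G, H). G \<union> H) ` ({G. G \<subseteq> P \<and> card G = r} \<times> Pow (Q - P)) \<subseteq> {F. F \<subseteq> Q \<and> card (F \<inter> P) = r}"
    proof
      fix y assume "y \<in> (\<lambda>(G, H). G \<union> H) ` ({G. G \<subseteq> P \<and> card G = r} \<times> Pow (Q - P))"
      then obtain G H where x: "y = G \<union> H" "G \<subseteq> P" "card G = r" "H \<subseteq> Q - P" by auto
      then have "(G \<union> H) \<inter> P = G" by blast
      then show "y \<in> {F. F \<subseteq> Q \<and> card (F \<inter> P) = r}" using x assms by auto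
    qed
  qed
  then have "card {F. F \<subseteq> Q \<and> card (F \<inter> P) = r} = card ({G. G \<subseteq> P \<and> card G = r} \<times> Pow (Q - P))"
    by (rule bij_betw_same_card)
  also have "\<dots> = (card P choose r) * 2 ^ card (Q - P)"
    using assms by (simp add: card_cartesian_product n_subsets card_Pow finite_subset)
  finally show ?thesis .
qed

lemma split_count:
  assumes fin: "finite S" and c2: "\<forall>x\<in>S. card x = 2" and cS: "card S = 2 * s"
  shows "card {X\<in>Spl S. card X = Suc s} \<le> card {X\<in>Spl S. card X = s}"
proof (cases "Spl S = {}")
  case True then show ?thesis by simp
next
  case False
  have fSpl: "finite (Spl S)" unfolding Spl_def using fin by (simp add: finite_subset)
  obtain X0 where X0: "X0 \<in> Spl S" "\<forall>X\<in>Spl S. card X \<le> card X0"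
  proof -
    have "finite (card ` Spl S)" "card ` Spl S \<noteq> {}" using fSpl False by auto
    then have "Max (card ` Spl S) \<in> card ` Spl S" by (rule Max_in)
    then obtain X0 where "X0 \<in> Spl S" "card X0 = Max (card ` Spl S)" by auto
    moreover have "\<forall>X\<in>Spl S. card X \<le> Max (card ` Spl S)" using fSpl by simp
    ultimately show ?thesis using that by auto
  qed
  have X0S: "X0 \<subseteq> S" using X0 unfolding Spl_def by auto
  define Q where "Q = Qc S"
  have fQ: "finite Q" using Q_finite fin Q_def by blast
  define P where "P = {K\<in>Q. card (K \<inter> X0) = card (K - X0) + 1}"
  have PQ: "P \<subseteq> Q" unfolding P_def by auto
  have Kge: "card (K - X0) \<le> card (K \<inter> X0)" if K: "K \<in> Q" for K
  proof -
    have "{K} \<subseteq> Qc S" using K Q_def by auto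
    then have "card (sd X0 (\<Union>{K})) + card (K \<inter> X0) = card X0 + card (K - X0)"
      using card_identity[OF fin X0S \<open>{K} \<subseteq> Qc S\<close>] by simp
    moreover have "sd X0 (\<Union>{K}) \<in> Spl S" using flip_spl[OF X0(1) UF_closed(1)[OF \<open>{K} \<subseteq> Qc S\<close>] UF_closed(2)[OF \<open>{K} \<subseteq> Qc S\<close>]] .
    moreover have "card (sd X0 (\<Union>{K})) \<le> card X0" using X0(2) calculation(2) by blast
    ultimately show ?thesis by linarith
  qed
  have Kind: "card (K \<inter> X0) = card (K - X0) + (if K \<in> P then 1 else 0)" if K: "K \<in> Q" for K
  proof (cases "K \<in> P")
    case True then show ?thesis unfolding P_def by simp
  next
    case False
    have "card (K \<inter> X0) \<le> card (K - X0) + 1" using comp_delta_le[OF fin c2 X0(1), of K] K Q_def by simp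
    moreover have "card (K \<inter> X0) \<noteq> card (K - X0) + 1" using False K unfolding P_def by simp
    ultimately show ?thesis using Kge[OF K] False by simp
  qed
  have formula: "card (sd X0 (\<Union>F)) + card (F \<inter> P) = card X0" if F: "F \<subseteq> Q" for F
  proof -
    have fF: "finite F" using finite_subset[OF F fQ] .
    have "(\<Sum>K\<in>F. card (K \<inter> X0)) = (\<Sum>K\<in>F. card (K - X0) + (if K \<in> P then 1 else 0))"
      using Kind F by (intro sum.cong refl) blast
    also have "\<dots> = (\<Sum>K\<in>F. card (K - X0)) + card (F \<inter> P)"
      using fF by (simp add: sum.distrib sum.If_cases)
    moreover have "F \<subseteq> Qc S" using F Q_def by simp
    ultimately show ?thesis using card_identity[OF fin X0S, of F] by linarith
  qed
  have UQ: "\<Union>Q = S"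
  proof
    show "\<Union>Q \<subseteq> S" unfolding Q_def using Q_sub by blast
    show "S \<subseteq> \<Union>Q"
    proof
      fix x assume "x \<in> S"
      then have "ecomp S x \<in> Q" unfolding Q_def Qc_def by blast
      then show "x \<in> \<Union>Q" using comp_self by blast
    qed
  qed
  have "sd X0 (\<Union>Q) = S - X0" using UQ X0S unfolding sd_def by blast
  then have "card (S - X0) + card P = card X0" using formula[of Q] PQ by (simp add: Int_absorb1)
  moreover have "card S = card X0 + card (S - X0)" using fin X0S
    using card_Int_Diff[OF fin, of X0] X0S by (simp add: Int_absorb1)
  ultimately have X0s: "s \<le> card X0" and cP: "card P = 2 * (card X0 - s)" using cS by linarith+
  define c where "c = card X0 - s"
  have bij: "bij_betw (\<lambda>F. sd X0 (\<Union>F)) (Pow Q) (Spl S)" using psi_bij[OF X0(1)] Q_def by simp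
  have cnt: "card {X\<in>Spl S. card X = t} = card {F. F \<subseteq> Q \<and> card (F \<inter> P) + t = card X0}" for t
  proof -
    have "{X\<in>Spl S. card X = t} = (\<lambda>F. sd X0 (\<Union>F)) ` {F. F \<subseteq> Q \<and> card (F \<inter> P) + t = card X0}"
    proof
      show "{X \<in> Spl S. card X = t} \<subseteq> (\<lambda>F. sd X0 (\<Union>F)) ` {F. F \<subseteq> Q \<and> card (F \<inter> P) + t = card X0}"
      proof
        fix X assume X: "X \<in> {X \<in> Spl S. card X = t}"
        have "X \<in> (\<lambda>F. sd X0 (\<Union>F)) ` Pow Q" using bij X unfolding bij_betw_def by simp
        then obtain F where "F \<in> Pow Q" "X = sd X0 (\<Union>F)" by (rule imageE) simp
        moreover have "card (F \<inter> P) + t = card X0" using formula[of F] X \<open>F \<in> Pow Q\<close> \<open>X = sd X0 (\<Union>F)\<close> by simp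
        ultimately show "X \<in> (\<lambda>F. sd X0 (\<Union>F)) ` {F. F \<subseteq> Q \<and> card (F \<inter> P) + t = card X0}"
          by (intro image_eqI[where x = F]) simp_all
      qed
      show "(\<lambda>F. sd X0 (\<Union>F)) ` {F. F \<subseteq> Q \<and> card (F \<inter> P) + t = card X0} \<subseteq> {X \<in> Spl S. card X = t}"
      proof
        fix X assume "X \<in> (\<lambda>F. sd X0 (\<Union>F)) ` {F. F \<subseteq> Q \<and> card (F \<inter> P) + t = card X0}"
        then obtain F where F: "F \<subseteq> Q" "card (F \<inter> P) + t = card X0" "X = sd X0 (\<Union>F)" by blast
        have "X \<in> Spl S" using bij F unfolding bij_betw_def by blast
        moreover have "card X = t" using formula[OF F(1)] F(2,3) by simp
        ultimately show "X \<in> {X \<in> Spl S. card X = t}" by simp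
      qed
    qed
    moreover have "inj_on (\<lambda>F. sd X0 (\<Union>F)) {F. F \<subseteq> Q \<and> card (F \<inter> P) + t = card X0}"
      using bij_betw_imp_inj_on[OF bij] by (rule inj_on_subset) auto
    ultimately show ?thesis by (simp add: card_image)
  qed
  have A: "card {X\<in>Spl S. card X = s} = (card P choose c) * 2 ^ card (Q - P)"
  proof -
    have "{F. F \<subseteq> Q \<and> card (F \<inter> P) + s = card X0} = {F. F \<subseteq> Q \<and> card (F \<inter> P) = c}"
      using X0s unfolding c_def by auto
    then show ?thesis using cnt[of s] count_subsets[OF fQ PQ] by simp
  qed
  show ?thesis
  proof (cases "c = 0")
    case True
    have "{F. F \<subseteq> Q \<and> card (F \<inter> P) + Suc s = card X0} = {}" using True X0s unfolding c_def by auto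
    then have "card {X\<in>Spl S. card X = Suc s} = 0" using cnt[of "Suc s"] by (simp only: card.empty)
    then show ?thesis by simp
  next
    case False
    have "{F. F \<subseteq> Q \<and> card (F \<inter> P) + Suc s = card X0} = {F. F \<subseteq> Q \<and> card (F \<inter> P) = c - 1}"
      using X0s False unfolding c_def by auto
    then have "card {X\<in>Spl S. card X = Suc s} = (card P choose (c - 1)) * 2 ^ card (Q - P)"
      using cnt[of "Suc s"] count_subsets[OF fQ PQ] by simp
    also have "\<dots> \<le> (card P choose c) * 2 ^ card (Q - P)"
      using binomial_maximum'[of c "c - 1"] cP c_def by simp
    finally show ?thesis using A by simp
  qed
qed




lemma matching_mt: "matching E M \<longleftrightarrow> M \<subseteq> E \<and> mt M"
  unfolding matching_def mt_def by auto

definition Mset :: "'a set set \<Rightarrow> nat \<Rightarrow> 'a set set set" where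
  "Mset E a = {M. matching E M \<and> card M = a}"

definition Dset :: "'a set set \<Rightarrow> nat \<Rightarrow> ('a set set \<times> 'a set set) set" where
  "Dset E c = {(I,S). I \<subseteq> E \<and> S \<subseteq> E \<and> mt I \<and> I \<inter> S = {} \<and> (\<forall>e\<in>I. \<forall>f\<in>S. e \<inter> f = {})
      \<and> 2 * card I + card S = c}"

definition Fib :: "nat \<Rightarrow> ('a set set \<times> 'a set set) \<Rightarrow> 'a set set set" where
  "Fib a p = {X\<in>Spl (snd p). card (fst p) + card X = a}"

lemma Mset_finite: "finite E \<Longrightarrow> finite (Mset E a)"
  unfolding Mset_def matching_def by (rule finite_subset[of _ "Pow E"]) auto

lemma Dset_finite: "finite E \<Longrightarrow> finite (Dset E c)"
  unfolding Dset_def by (rule finite_subset[of _ "Pow E \<times> Pow E"]) auto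

lemma Fib_finite: "finite E \<Longrightarrow> p \<in> Dset E c \<Longrightarrow> finite (Fib a p)"
proof -
  assume f: "finite E" and p: "p \<in> Dset E c"
  have "snd p \<subseteq> E" using p unfolding Dset_def by auto
  then have "finite (Pow (snd p))" using f finite_subset by blast
  moreover have "Fib a p \<subseteq> Pow (snd p)" unfolding Fib_def Spl_def by auto
  ultimately show ?thesis using finite_subset by blast
qed

lemma Sigma_finite: "finite E \<Longrightarrow> finite (Sigma (Dset E c) (Fib a))"
  using Dset_finite Fib_finite by blast

lemma phi_into:
  assumes fin: "finite E" and A: "A \<in> Mset E a" and B: "B \<in> Mset E b"
  shows "((A \<inter> B, sd A B), A - B) \<in> Sigma (Dset E (a + b)) (Fib a)"
proof -
  have Am: "A \<subseteq> E" "mt A" "card A = a" and Bm: "B \<subseteq> E" "mt B" "card B = b"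
    using A B unfolding Mset_def matching_mt by auto
  have fA: "finite A" "finite B" using finite_subset[OF Am(1) fin] finite_subset[OF Bm(1) fin] by auto
  have cA: "card A = card (A \<inter> B) + card (A - B)" using card_Int_Diff[OF fA(1)] .
  have cB: "card B = card (A \<inter> B) + card (B - A)" using card_Int_Diff[OF fA(2), of A] by (simp add: Int_commute)
  have cS: "card (sd A B) = card (A - B) + card (B - A)"
    unfolding sd_def by (rule card_Un_disjoint) (use fA in blast)+
  have "(A \<inter> B, sd A B) \<in> Dset E (a + b)"
    unfolding Dset_def
  proof (simp, intro conjI)
    show "A \<inter> B \<subseteq> E" using Am by blast
    show "sd A B \<subseteq> E" using Am Bm unfolding sd_def by blast
    show "mt (A \<inter> B)" using Am(2) unfolding mt_def by blast
    show "A \<inter> B \<inter> sd A B = {}" unfolding sd_def by blast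
    show "\<forall>e\<in>A \<inter> B. \<forall>f\<in>sd A B. e \<inter> f = {}"
    proof (intro ballI)
      fix e f assume e: "e \<in> A \<inter> B" and f: "f \<in> sd A B"
      show "e \<inter> f = {}"
      proof (cases "f \<in> A")
        case True
        then have "f \<notin> B" using f unfolding sd_def by blast
        then have "e \<noteq> f" using e by blast
        then show ?thesis using Am(2) e True unfolding mt_def by blast
      next
        case False
        then have "f \<in> B" using f unfolding sd_def by blast
        have "e \<noteq> f" using e False by blast
        then show ?thesis using Bm(2) e \<open>f \<in> B\<close> unfolding mt_def by blast
      qed
    qed
    show "2 * card (A \<inter> B) + card (sd A B) = a + b" using cA cB cS Am Bm by linarith
  qed
  moreover have "A - B \<in> Fib a (A \<inter> B, sd A B)"
    unfolding Fib_def Spl_def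
  proof (simp, intro conjI)
    show "A - B \<subseteq> sd A B" unfolding sd_def by blast
    show "mt (A - B)" using Am(2) unfolding mt_def by blast
    have "sd A B - (A - B) = B - A" unfolding sd_def by blast
    then show "mt (sd A B - (A - B))" using Bm(2) unfolding mt_def by simp
    show "card (A \<inter> B) + card (A - B) = a" using cA Am by simp
  qed
  ultimately show ?thesis by simp
qed

lemma phi_inj: "inj_on (\<lambda>(A,B). ((A \<inter> B, sd A B), A - B)) X"
proof (rule inj_onI)
  fix x y assume "x \<in> X" "y \<in> X" and eq: "(\<lambda>(A, B). ((A \<inter> B, sd A B), A - B)) x = (\<lambda>(A, B). ((A \<inter> B, sd A B), A - B)) y"
  obtain A B where x: "x = (A,B)" by fastforce
  obtain A' B' where y: "y = (A',B')" by fastforce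
  have 1: "A \<inter> B = A' \<inter> B'" "sd A B = sd A' B'" "A - B = A' - B'" using eq x y by auto
  have "A = (A \<inter> B) \<union> (A - B)" "A' = (A' \<inter> B') \<union> (A' - B')" by blast+
  then have "A = A'" using 1 by simp
  have "B = (A \<inter> B) \<union> (sd A B - (A - B))" "B' = (A' \<inter> B') \<union> (sd A' B' - (A' - B'))" unfolding sd_def by blast+
  then have "B = B'" using 1 by simp
  show "x = y" using x y \<open>A = A'\<close> \<open>B = B'\<close> by simp
qed

lemma psi_into:
  assumes fin: "finite E" and p: "((I,S),X) \<in> Sigma (Dset E (a + b)) (Fib a)"
  shows "(I \<union> X, I \<union> (S - X)) \<in> Mset E a \<times> Mset E b"
proof -
  have D: "I \<subseteq> E" "S \<subseteq> E" "mt I" "I \<inter> S = {}" "\<forall>e\<in>I. \<forall>f\<in>S. e \<inter> f = {}" "2 * card I + card S = a + b"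
    using p unfolding Dset_def by auto
  have X: "X \<subseteq> S" "mt X" "mt (S - X)" "card I + card X = a" using p unfolding Fib_def Spl_def by auto
  have fS: "finite S" "finite I" using finite_subset[OF D(2) fin] finite_subset[OF D(1) fin] by auto
  have fX: "finite X" using finite_subset[OF X(1) fS(1)] .
  have cA: "card (I \<union> X) = card I + card X"
    by (rule card_Un_disjoint) (use fS fX D X in blast)+
  have cB: "card (I \<union> (S - X)) = card I + card (S - X)"
    by (rule card_Un_disjoint) (use fS fX D X in blast)+
  have cSX: "card (S - X) = card S - card X" using card_Diff_subset[OF fX X(1)] .
  have "card X \<le> card S" using card_mono[OF fS(1) X(1)] .
  have "matching E (I \<union> X)" unfolding matching_mt
  proof (intro conjI)
    show "I \<union> X \<subseteq> E" using D X by blast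
    show "mt (I \<union> X)" unfolding mt_def
    proof (intro ballI impI)
      fix e f assume "e \<in> I \<union> X" "f \<in> I \<union> X" "e \<noteq> f"
      then show "e \<inter> f = {}" using D(3,5) X(1,2) unfolding mt_def by (metis Int_commute UnE subsetD)
    qed
  qed
  moreover have "matching E (I \<union> (S - X))" unfolding matching_mt
  proof (intro conjI)
    show "I \<union> (S - X) \<subseteq> E" using D X by blast
    show "mt (I \<union> (S - X))" unfolding mt_def
    proof (intro ballI impI)
      fix e f assume "e \<in> I \<union> (S - X)" "f \<in> I \<union> (S - X)" "e \<noteq> f"
      then show "e \<inter> f = {}" using D(3,5) X(3) unfolding mt_def by (metis Diff_iff Int_commute UnE)
    qed
  qed
  ultimately show ?thesis unfolding Mset_def using cA cB cSX X(4) D(6) \<open>card X \<le> card S\<close> by auto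
qed

lemma psi_inj: "inj_on (\<lambda>((I,S),X). (I \<union> X, I \<union> (S - X))) (Sigma (Dset E c) (Fib a))"
proof (rule inj_onI)
  fix x y assume xs: "x \<in> Sigma (Dset E c) (Fib a)" "y \<in> Sigma (Dset E c) (Fib a)"
    and eq: "(\<lambda>((I,S),X). (I \<union> X, I \<union> (S - X))) x = (\<lambda>((I,S),X). (I \<union> X, I \<union> (S - X))) y"
  obtain I S X where x: "x = ((I,S),X)" by (metis prod.collapse)
  obtain I' S' X' where y: "y = ((I',S'),X')" by (metis prod.collapse)
  have Dx: "I \<inter> S = {}" "X \<subseteq> S" using xs(1) x unfolding Dset_def Fib_def Spl_def by auto
  have Dy: "I' \<inter> S' = {}" "X' \<subseteq> S'" using xs(2) y unfolding Dset_def Fib_def Spl_def by auto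
  have e1: "I \<union> X = I' \<union> X'" "I \<union> (S - X) = I' \<union> (S' - X')" using eq x y by auto
  have "I = (I \<union> X) \<inter> (I \<union> (S - X))" using Dx by blast
  moreover have "I' = (I' \<union> X') \<inter> (I' \<union> (S' - X'))" using Dy by blast
  ultimately have "I = I'" using e1 by simp
  have "X = (I \<union> X) - I" "X' = (I' \<union> X') - I'" using Dx Dy by blast+
  then have "X = X'" using e1 \<open>I = I'\<close> by simp
  have "S = ((I \<union> X) \<union> (I \<union> (S - X))) - I" "S' = ((I' \<union> X') \<union> (I' \<union> (S' - X'))) - I'" using Dx Dy by blast+
  then have "S = S'" using e1 \<open>I = I'\<close> by simp
  show "x = y" using x y \<open>I = I'\<close> \<open>S = S'\<close> \<open>X = X'\<close> by simp
qed

lemma logconc: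
  assumes fin: "finite E" and c2: "\<forall>e\<in>E. card e = 2"
  shows "num_matchings E (j + 2) * num_matchings E j \<le> num_matchings E (j + 1) ^ 2"
proof -
  have nm: "num_matchings E a = card (Mset E a)" for a unfolding num_matchings_def Mset_def by simp
  define D where "D = Dset E (2 * j + 2)"
  have fD: "finite D" using Dset_finite[OF fin] D_def by simp
  have "num_matchings E (j + 2) * num_matchings E j = card (Mset E (j+2) \<times> Mset E j)"
    by (simp add: nm card_cartesian_product)
  also have "\<dots> \<le> card (Sigma D (Fib (j+2)))"
  proof (rule card_inj_on_le[OF phi_inj])
    show "(\<lambda>(A, B). ((A \<inter> B, sd A B), A - B)) ` (Mset E (j + 2) \<times> Mset E j) \<subseteq> Sigma D (Fib (j + 2))"
    proof
      fix y assume "y \<in> (\<lambda>(A, B). ((A \<inter> B, sd A B), A - B)) ` (Mset E (j + 2) \<times> Mset E j)"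
      then obtain A B where AB: "A \<in> Mset E (j+2)" "B \<in> Mset E j" "y = ((A \<inter> B, sd A B), A - B)" by auto
      have "y \<in> Sigma (Dset E ((j+2) + j)) (Fib (j+2))" using phi_into[OF fin AB(1,2)] AB(3) by simp
      moreover have "(j+2) + j = 2 * j + 2" by simp
      ultimately show "y \<in> Sigma D (Fib (j + 2))" unfolding D_def by metis
    qed
    show "finite (Sigma D (Fib (j + 2)))" using Sigma_finite[OF fin] D_def by simp
  qed
  also have "\<dots> = (\<Sum>p\<in>D. card (Fib (j+2) p))"
    using fD Fib_finite[OF fin] D_def by (simp add: card_SigmaI)
  also have "\<dots> \<le> (\<Sum>p\<in>D. card (Fib (j+1) p))"
  proof (rule sum_mono)
    fix p assume p: "p \<in> D"
    obtain I S where pIS: "p = (I,S)" by fastforce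
    have Dp: "S \<subseteq> E" "2 * card I + card S = 2 * j + 2" using p pIS unfolding D_def Dset_def by auto
    define s where "s = j + 1 - card I"
    have cS: "card S = 2 * s" using Dp(2) unfolding s_def by linarith
    have fS: "finite S" using finite_subset[OF Dp(1) fin] .
    have c2S: "\<forall>x\<in>S. card x = 2" using Dp(1) c2 by blast
    have "card {X\<in>Spl S. card X = Suc s} \<le> card {X\<in>Spl S. card X = s}" using split_count[OF fS c2S cS] .
    moreover have "Fib (j+2) p = {X\<in>Spl S. card X = Suc s}" unfolding Fib_def pIS s_def using Dp(2) by auto
    moreover have "Fib (j+1) p = {X\<in>Spl S. card X = s}" unfolding Fib_def pIS s_def using Dp(2) by auto
    ultimately show "card (Fib (j+2) p) \<le> card (Fib (j+1) p)" by simp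
  qed
  also have "\<dots> = card (Sigma D (Fib (j+1)))"
    using fD Fib_finite[OF fin] D_def by (simp add: card_SigmaI)
  also have "\<dots> \<le> card (Mset E (j+1) \<times> Mset E (j+1))"
    unfolding D_def
  proof (rule card_inj_on_le[OF psi_inj[of E "2*j+2" "j+1"]])
    show "(\<lambda>((I, S), X). (I \<union> X, I \<union> (S - X))) ` Sigma (Dset E (2 * j + 2)) (Fib (j + 1)) \<subseteq> Mset E (j + 1) \<times> Mset E (j + 1)"
    proof
      fix y assume "y \<in> (\<lambda>((I, S), X). (I \<union> X, I \<union> (S - X))) ` Sigma (Dset E (2 * j + 2)) (Fib (j + 1))"
      then obtain I S X where IS: "((I,S),X) \<in> Sigma (Dset E (2 * j + 2)) (Fib (j + 1))" "y = (I \<union> X, I \<union> (S - X))"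
        by auto
      have "2 * j + 2 = (j+1) + (j+1)" by simp
      then have "((I,S),X) \<in> Sigma (Dset E ((j+1) + (j+1))) (Fib (j + 1))" using IS(1) by metis
      note this IS(2)
      then show "y \<in> Mset E (j + 1) \<times> Mset E (j + 1)" using psi_into[OF fin] by blast
    qed
    show "finite (Mset E (j + 1) \<times> Mset E (j + 1))" using Mset_finite[OF fin] by simp
  qed
  also have "\<dots> = num_matchings E (j + 1) ^ 2" by (simp add: nm card_cartesian_product power2_eq_square)
  finally show ?thesis .
qed




lemma supp_line:
  fixes a :: "nat \<Rightarrow> nat"
  assumes lc: "\<forall>j. a (j+2) * a j \<le> a (j+1)^2"
    and down: "\<forall>j. a (Suc j) > 0 \<longrightarrow> a j > 0"
    and k1: "k \<ge> 1" and ak: "a k > 0"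
  shows "real (a j) \<le> real (a k) * exp ((ln (real (a k)) - ln (real (a (k-1)))) * (real j - real k))"
proof -
  define L where "L i = ln (real (a i))" for i
  define s where "s = L k - L (k - 1)"
  define D where "D i = L i - L (i - 1)" for i
  have posdown: "a i > 0" if "i \<le> k" for i
  proof -
    have "\<forall>t. a (k - t) > 0"
    proof
      fix t show "a (k - t) > 0"
      proof (induction t)
        case 0 then show ?case using ak by simp
      next
        case (Suc t)
        then show ?case
        proof (cases "k - t = 0")
          case True then show ?thesis using Suc by simp
        next
          case False
          then have "k - t = Suc (k - Suc t)" by simp
          then show ?thesis using Suc down by metis
        qed
      qed
    qed
    then have "a (k - (k - i)) > 0" by blast
    then show ?thesis using that by simp
  qed
  have conc: "D (i+1) \<le> D i" if i1: "i \<ge> 1" and pos: "a (i+1) > 0" for i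
  proof -
    have p1: "a i > 0" using down pos by simp
    have p0: "a (i - 1) > 0" using down p1 i1 by (metis Suc_diff_1 less_le_trans zero_less_one)
    have "a (i+1) * a (i - 1) \<le> a i ^ 2" using lc[rule_format, of "i - 1"] i1 by simp
    then have "real (a (i+1)) * real (a (i-1)) \<le> real (a i) ^ 2" by (metis of_nat_le_iff of_nat_mult of_nat_power)
    then have "ln (real (a (i+1)) * real (a (i-1))) \<le> ln (real (a i) ^ 2)"
      using p0 pos p1 by (subst ln_le_cancel_iff) auto
    then have "L (i+1) + L (i - 1) \<le> 2 * L i"
      unfolding L_def using p0 pos p1 by (simp add: ln_mult ln_realpow)
    then show ?thesis unfolding D_def using i1 by simp
  qed
  have up: "a (k + t) > 0 \<longrightarrow> D (k + t) \<le> s" for t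
  proof (induction t)
    case 0 then show ?case unfolding D_def s_def by simp
  next
    case (Suc t)
    show ?case
    proof
      assume p: "a (k + Suc t) > 0"
      then have "a (k + t) > 0" using down by simp
      have "D (k + t + 1) \<le> D (k + t)" using conc[of "k+t"] k1 p by simp
      then show "D (k + Suc t) \<le> s" using Suc \<open>a (k+t) > 0\<close> by simp
    qed
  qed
  have upL: "a (k + t) > 0 \<longrightarrow> L (k + t) \<le> L k + real t * s" for t
  proof (induction t)
    case 0 then show ?case by simp
  next
    case (Suc t)
    show ?case
    proof
      assume p: "a (k + Suc t) > 0"
      then have "a (k + t) > 0" using down by simp
      have "L (k + Suc t) = L (k + t) + D (k + Suc t)" unfolding D_def by simp
      also have "\<dots> \<le> L k + real t * s + s" using Suc \<open>a (k+t) > 0\<close> up[of "Suc t"] p by simp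
      finally show "L (k + Suc t) \<le> L k + real (Suc t) * s" by (simp add: algebra_simps)
    qed
  qed
  have downD: "t < k \<longrightarrow> D (k - t) \<ge> s" for t
  proof (induction t)
    case 0 then show ?case unfolding D_def s_def by simp
  next
    case (Suc t)
    show ?case
    proof
      assume t: "Suc t < k"
      have c1: "1 \<le> k - Suc t" using t by simp
      have c2: "a (k - Suc t + 1) > 0" using posdown[of "k - Suc t + 1"] t by simp
      have "D (k - Suc t + 1) \<le> D (k - Suc t)" using conc[OF c1 c2] .
      moreover have "k - Suc t + 1 = k - t" using t by linarith
      ultimately have "D (k - t) \<le> D (k - Suc t)" by metis
      moreover have "s \<le> D (k - t)" using Suc.IH t by linarith
      ultimately show "D (k - Suc t) \<ge> s" by linarith
    qed
  qed
  have downL: "t \<le> k \<longrightarrow> L (k - t) \<le> L k - real t * s" for t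
  proof (induction t)
    case 0 then show ?case by simp
  next
    case (Suc t)
    show ?case
    proof
      assume t: "Suc t \<le> k"
      have e: "k - t - 1 = k - Suc t" by simp
      have "L (k - Suc t) = L (k - t) - D (k - t)" unfolding D_def e by simp
      also have "\<dots> \<le> L k - real t * s - s" using Suc.IH t downD[of t] by simp
      finally show "L (k - Suc t) \<le> L k - real (Suc t) * s" by (simp add: algebra_simps)
    qed
  qed
  have expL: "real (a i) = exp (L i)" if "a i > 0" for i unfolding L_def using that by simp
  have rhs: "real (a k) * exp (s * (real j - real k)) = exp (L k + s * (real j - real k))"
    using expL[OF ak] by (simp add: exp_add)
  show ?thesis
  proof (cases "a j = 0")
    case True then show ?thesis by simp
  next
    case False
    then have pj: "a j > 0" by simp
    have "L j \<le> L k + s * (real j - real k)"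
    proof (cases "k \<le> j")
      case True
      then obtain t where t: "j = k + t" using le_Suc_ex by blast
      then show ?thesis using upL[of t] pj by (simp add: algebra_simps)
    next
      case False
      define t where "t = k - j"
      have t: "j = k - t" "t \<le> k" using False unfolding t_def by auto
      then show ?thesis using downL[of t] pj False by (simp add: algebra_simps of_nat_diff)
    qed
    then have "real (a j) \<le> exp (L k + s * (real j - real k))" using expL[OF pj] by simp
    then show ?thesis using rhs unfolding s_def L_def by simp
  qed
qed




definition cp :: "nat \<Rightarrow> nat \<Rightarrow> nat" where "cp m v = prod_encode (m, v)"
definition tag :: "nat \<Rightarrow> nat" where "tag x = fst (prod_decode x)"

lemma tag_cp[simp]: "tag (cp m v) = m" unfolding tag_def cp_def by simp
lemma cp_eq[simp]: "cp m u = cp m' v \<longleftrightarrow> m = m' \<and> u = v" unfolding cp_def by simp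
lemma inj_cp: "inj (cp m)" by (rule injI) simp

primrec HV :: "nat set \<Rightarrow> nat \<Rightarrow> nat set" where
  "HV V 0 = {}"
| "HV V (Suc m) = cp m ` V \<union> HV V m"

primrec HE :: "nat set set \<Rightarrow> nat \<Rightarrow> nat set set" where
  "HE E 0 = {}"
| "HE E (Suc m) = (\<lambda>e. cp m ` e) ` E \<union> HE E m"

lemma HV_tag: "x \<in> HV V m \<Longrightarrow> tag x < m"
  by (induction m) auto

lemma HE_tag: "e \<in> HE E m \<Longrightarrow> x \<in> e \<Longrightarrow> tag x < m"
  by (induction m) auto

lemma HV_finite: "finite V \<Longrightarrow> finite (HV V m)"
  by (induction m) auto

lemma HE_finite: "finite E \<Longrightarrow> finite (HE E m)"
  by (induction m) auto

lemma HV_card: "finite V \<Longrightarrow> card (HV V m) = m * card V"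
proof (induction m)
  case 0 then show ?case by simp
next
  case (Suc m)
  have d: "cp m ` V \<inter> HV V m = {}" using HV_tag by fastforce
  have "card (HV V (Suc m)) = card (cp m ` V) + card (HV V m)"
    using card_Un_disjoint[OF _ HV_finite[OF Suc.prems] d] Suc.prems by simp
  also have "card (cp m ` V) = card V" using card_image[OF inj_on_subset[OF inj_cp]] by blast
  finally show ?case using Suc by simp
qed

lemma HV_Un: "HV A m \<union> HV B m = HV (A \<union> B) m"
  by (induction m) auto

lemma HV_disj: "A \<inter> B = {} \<Longrightarrow> HV A m \<inter> HV B m = {}"
proof (induction m)
  case 0 then show ?case by simp
next
  case (Suc m)
  have 1: "cp m ` A \<inter> cp m ` B = {}" using Suc.prems by auto
  have 2: "cp m ` A \<inter> HV B m = {}" "HV A m \<inter> cp m ` B = {}" using HV_tag by fastforce+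
  show ?case using 1 2 Suc by auto
qed

lemma HE_sub: "\<forall>e\<in>E. e \<subseteq> V \<Longrightarrow> e \<in> HE E m \<Longrightarrow> e \<subseteq> HV V m"
  by (induction m) auto

lemma HE_card2: "\<forall>e\<in>E. card e = 2 \<Longrightarrow> e \<in> HE E m \<Longrightarrow> card e = 2"
proof (induction m)
  case 0 then show ?case by simp
next
  case (Suc m)
  show ?case
  proof (cases "e \<in> HE E m")
    case True then show ?thesis using Suc by blast
  next
    case False
    then obtain f where f: "f \<in> E" "e = cp m ` f" using Suc.prems by auto
    have "card (cp m ` f) = card f" using card_image[OF inj_on_subset[OF inj_cp]] by blast
    then show ?thesis using f Suc.prems by simp
  qed
qed

lemma H_simple: "simple_graph V E \<Longrightarrow> simple_graph (HV V m) (HE E m)"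
proof -
  assume sg: "simple_graph V E"
  have "finite V" "\<forall>e\<in>E. e \<subseteq> V" "\<forall>e\<in>E. card e = 2" using sg unfolding simple_graph_def by auto
  then show ?thesis unfolding simple_graph_def using HV_finite[of V m] HE_sub[of E V _ m] HE_card2[of E _ m] by auto
qed

lemma H_bip:
  assumes "bipartite V E"
  shows "bipartite (HV V m) (HE E m)"
proof -
  obtain A B where AB: "A \<union> B = V" "A \<inter> B = {}" "\<forall>e\<in>E. \<exists>a\<in>A. \<exists>b\<in>B. e = {a, b}"
    using assms unfolding bipartite_def by blast
  have "\<forall>e\<in>HE E m. \<exists>a\<in>HV A m. \<exists>b\<in>HV B m. e = {a, b}"
  proof (induction m)
    case 0 then show ?case by simp
  next
    case (Suc m)
    show ?case
    proof
      fix e assume e: "e \<in> HE E (Suc m)"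
      show "\<exists>a\<in>HV A (Suc m). \<exists>b\<in>HV B (Suc m). e = {a, b}"
      proof (cases "e \<in> HE E m")
        case True
        then obtain a b where "a \<in> HV A m" "b \<in> HV B m" "e = {a, b}" using Suc by blast
        then show ?thesis by auto
      next
        case False
        then obtain f where f: "f \<in> E" "e = cp m ` f" using e by auto
        then obtain a b where "a \<in> A" "b \<in> B" "f = {a,b}" using AB(3) by blast
        then show ?thesis using f by (intro bexI[of _ "cp m a"] bexI[of _ "cp m b"]) auto
      qed
    qed
  qed
  moreover have "HV A m \<union> HV B m = HV V m" using HV_Un[of A m B] AB(1) by simp
  moreover have "HV A m \<inter> HV B m = {}" using HV_disj[OF AB(2)] .
  ultimately show ?thesis unfolding bipartite_def by (intro exI[of _ "HV A m"] exI[of _ "HV B m"]) simp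
qed

lemma H_regular:
  assumes reg: "regular d V E" and sg: "simple_graph V E"
  shows "regular d (HV V m) (HE E m)"
proof (induction m)
  case 0 then show ?case unfolding regular_def by simp
next
  case (Suc m)
  have EV: "\<forall>e\<in>E. e \<subseteq> V" using sg unfolding simple_graph_def by blast
  show ?case unfolding regular_def
  proof
    fix v assume v: "v \<in> HV V (Suc m)"
    show "degree (HE E (Suc m)) v = d"
    proof (cases "v \<in> HV V m")
      case True
      have "{e \<in> HE E (Suc m). v \<in> e} = {e \<in> HE E m. v \<in> e}"
        using HV_tag[OF True] by auto
      then show ?thesis using Suc True unfolding regular_def degree_def by simp
    next
      case False
      then obtain u where u: "u \<in> V" "v = cp m u" using v by auto
      have "{e \<in> HE E (Suc m). v \<in> e} = (\<lambda>e. cp m ` e) ` {e\<in>E. u \<in> e}"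
      proof
        show "{e \<in> HE E (Suc m). v \<in> e} \<subseteq> (\<lambda>e. cp m ` e) ` {e\<in>E. u \<in> e}"
        proof
          fix e assume e: "e \<in> {e \<in> HE E (Suc m). v \<in> e}"
          have "e \<notin> HE E m" using HE_tag[of e E m v] e u by auto
          then obtain f where f: "f \<in> E" "e = cp m ` f" using e by auto
          then have "u \<in> f" using e u by auto
          then show "e \<in> (\<lambda>e. cp m ` e) ` {e\<in>E. u \<in> e}" using f by blast
        qed
        show "(\<lambda>e. cp m ` e) ` {e\<in>E. u \<in> e} \<subseteq> {e \<in> HE E (Suc m). v \<in> e}" using u by auto
      qed
      moreover have "inj_on (\<lambda>e. cp m ` e) {e\<in>E. u \<in> e}"
        using inj_cp by (simp add: inj_on_def inj_image_eq_iff)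
      ultimately have "degree (HE E (Suc m)) v = degree E u" unfolding degree_def by (simp add: card_image)
      then show ?thesis using reg u unfolding regular_def by simp
    qed
  qed
qed

lemma nm_empty: "num_matchings {} K = (if K = 0 then 1 else 0)"
proof -
  have eq: "{M. matching {} M \<and> card M = K} = (if K = 0 then {{}} else {})"
    unfolding matching_def by auto
  show ?thesis unfolding num_matchings_def eq by simp
qed

lemma nm_copy:
  assumes "inj f" "finite E"
  shows "num_matchings ((\<lambda>e. f ` e) ` E) j \<le> num_matchings E j"
proof -
  have injF: "inj (\<lambda>e. f ` e)" using assms(1) by (simp add: inj_on_def inj_image_eq_iff)
  have "Mset ((\<lambda>e. f ` e) ` E) j \<subseteq> (\<lambda>M. (\<lambda>e. f ` e) ` M) ` Mset E j"
  proof
    fix M' assume M': "M' \<in> Mset ((\<lambda>e. f ` e) ` E) j"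
    define M where "M = {e\<in>E. f ` e \<in> M'}"
    have img: "(\<lambda>e. f ` e) ` M = M'" using M' unfolding M_def Mset_def matching_def by auto
    have "matching E M" unfolding matching_def
    proof (intro conjI ballI impI)
      show "M \<subseteq> E" unfolding M_def by auto
      fix e g assume "e \<in> M" "g \<in> M" "e \<noteq> g"
      then have "f ` e \<noteq> f ` g" "f ` e \<in> M'" "f ` g \<in> M'" using injF unfolding M_def inj_def by auto
      moreover have mm: "\<forall>x\<in>M'. \<forall>y\<in>M'. x \<noteq> y \<longrightarrow> x \<inter> y = {}"
        using M' unfolding Mset_def matching_def by simp
      ultimately have "f ` e \<inter> f ` g = {}" by simp
      then show "e \<inter> g = {}" by auto
    qed
    moreover have "card M = j"
    proof -
      have "card ((\<lambda>e. f ` e) ` M) = card M" using injF by (simp add: card_image inj_on_subset)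
      then show ?thesis using img M' unfolding Mset_def by simp
    qed
    ultimately show "M' \<in> (\<lambda>M. (\<lambda>e. f ` e) ` M) ` Mset E j" using img unfolding Mset_def by blast
  qed
  then have "card (Mset ((\<lambda>e. f ` e) ` E) j) \<le> card ((\<lambda>M. (\<lambda>e. f ` e) ` M) ` Mset E j)"
    using Mset_finite[OF assms(2)] by (intro card_mono) auto
  also have "\<dots> \<le> card (Mset E j)" by (rule card_image_le) (use Mset_finite[OF assms(2)] in simp)
  finally show ?thesis unfolding Mset_def num_matchings_def by simp
qed

lemma nm_union:
  assumes f1: "finite E1" and f2: "finite E2" and ne: "\<forall>e\<in>E1. e \<noteq> {}" and dj: "\<Union>E1 \<inter> \<Union>E2 = {}"
  shows "num_matchings (E1 \<union> E2) K \<le> (\<Sum>j\<le>K. num_matchings E1 j * num_matchings E2 (K - j))"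
proof -
  have E12: "E1 \<inter> E2 = {}" using ne dj by blast
  have sub: "Mset (E1 \<union> E2) K \<subseteq> (\<Union>j\<in>{..K}. (\<lambda>(A,B). A \<union> B) ` (Mset E1 j \<times> Mset E2 (K - j)))"
  proof
    fix M assume M: "M \<in> Mset (E1 \<union> E2) K"
    have Mm: "M \<subseteq> E1 \<union> E2" "mt M" "card M = K" using M unfolding Mset_def matching_mt by auto
    define A where "A = M \<inter> E1"
    define B where "B = M - E1"
    have fM: "finite M" using Mm(1) f1 f2 finite_subset by blast
    have "card M = card A + card B" unfolding A_def B_def using card_Int_Diff[OF fM] .
    then have cAB: "card A \<le> K" "card B = K - card A" using Mm(3) by auto
    have "A \<in> Mset E1 (card A)" unfolding Mset_def matching_mt A_def using Mm(2) unfolding mt_def by auto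
    moreover have "B \<in> Mset E2 (K - card A)" unfolding Mset_def matching_mt B_def
      using Mm cAB(2) unfolding mt_def B_def by auto
    moreover have "M = A \<union> B" unfolding A_def B_def by blast
    ultimately show "M \<in> (\<Union>j\<in>{..K}. (\<lambda>(A,B). A \<union> B) ` (Mset E1 j \<times> Mset E2 (K - j)))"
      using cAB(1) by blast
  qed
  have fin12: "finite (E1 \<union> E2)" using f1 f2 by simp
  have "num_matchings (E1 \<union> E2) K = card (Mset (E1 \<union> E2) K)" unfolding num_matchings_def Mset_def by simp
  also have "\<dots> \<le> card (\<Union>j\<in>{..K}. (\<lambda>(A,B). A \<union> B) ` (Mset E1 j \<times> Mset E2 (K - j)))"
    by (rule card_mono[OF _ sub]) (use Mset_finite f1 f2 in auto)
  also have "\<dots> \<le> (\<Sum>j\<le>K. card ((\<lambda>(A,B). A \<union> B) ` (Mset E1 j \<times> Mset E2 (K - j))))"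
    by (rule card_UN_le) simp
  also have "\<dots> \<le> (\<Sum>j\<le>K. card (Mset E1 j \<times> Mset E2 (K - j)))"
    by (rule sum_mono, rule card_image_le) (use Mset_finite[OF f1] Mset_finite[OF f2] in blast)
  also have "\<dots> = (\<Sum>j\<le>K. num_matchings E1 j * num_matchings E2 (K - j))"
    unfolding num_matchings_def Mset_def by (simp add: card_cartesian_product)
  finally show ?thesis .
qed

lemma nm_HE_step:
  assumes fE: "finite E" and c2: "\<forall>e\<in>E. card e = 2"
  shows "num_matchings (HE E (Suc m)) K \<le> (\<Sum>j\<le>K. num_matchings E j * num_matchings (HE E m) (K - j))"
proof -
  have ne: "\<forall>e\<in>(\<lambda>e. cp m ` e) ` E. e \<noteq> {}" using c2 by fastforce
  have dj: "\<Union>((\<lambda>e. cp m ` e) ` E) \<inter> \<Union>(HE E m) = {}" using HE_tag by fastforce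
  have "num_matchings (HE E (Suc m)) K \<le> (\<Sum>j\<le>K. num_matchings ((\<lambda>e. cp m ` e) ` E) j * num_matchings (HE E m) (K - j))"
    using nm_union[OF _ HE_finite[OF fE] ne dj] fE by simp
  also have "\<dots> \<le> (\<Sum>j\<le>K. num_matchings E j * num_matchings (HE E m) (K - j))"
    by (rule sum_mono, rule mult_right_mono) (use nm_copy[OF inj_cp fE] in auto)
  finally show ?thesis .
qed




lemma nm_down:
  assumes "finite E" "num_matchings E (Suc j) > 0"
  shows "num_matchings E j > 0"
proof -
  have "{M. matching E M \<and> card M = Suc j} \<noteq> {}" using assms(2) unfolding num_matchings_def by (metis card.empty less_irrefl)
  then obtain M where M: "matching E M" "card M = Suc j" by blast
  then obtain x where x: "x \<in> M" by (metis card.empty ex_in_conv nat.distinct(1))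
  have fM: "finite M" using M(2) card.infinite by fastforce
  have "matching E (M - {x})" using M(1) unfolding matching_def by blast
  moreover have "card (M - {x}) = j" using M(2) x fM by simp
  ultimately have "M - {x} \<in> {M. matching E M \<and> card M = j}" by simp
  moreover have "finite {M. matching E M \<and> card M = j}"
    using Mset_finite[OF assms(1)] unfolding Mset_def .
  ultimately show ?thesis unfolding num_matchings_def by (metis card_gt_0_iff empty_iff)
qed

lemma nm_zero_big:
  assumes sg: "simple_graph V E" and cV: "card V = 2 * n" and j: "j > n"
  shows "num_matchings E j = 0"
proof -
  have eq: "{M. matching E M \<and> card M = j} = {}"
  proof (rule ccontr)
    assume "{M. matching E M \<and> card M = j} \<noteq> {}"
    then obtain M where M: "matching E M" "card M = j" by blast
    have fV: "finite V" and EV: "\<forall>e\<in>E. e \<subseteq> V \<and> card e = 2" using sg unfolding simple_graph_def by auto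
    have MV: "M \<subseteq> E" "mt M" using M(1) unfolding matching_mt by auto
    have fM: "finite M" using M(2) j card.infinite by fastforce
    have "card (\<Union>M) = 2 * card M" using mt_card_union[OF MV(2) fM] EV MV(1) by blast
    moreover have "card (\<Union>M) \<le> card V" using EV MV(1) fV by (intro card_mono) auto
    ultimately show False using M(2) cV j by linarith
  qed
  show ?thesis unfolding num_matchings_def eq by simp
qed

lemma nm_zero: "finite E \<Longrightarrow> num_matchings E 0 = 1"
proof -
  assume fE: "finite E"
  have "{M. matching E M \<and> card M = 0} = {{}}"
  proof (rule set_eqI)
    fix M show "M \<in> {M. matching E M \<and> card M = 0} \<longleftrightarrow> M \<in> {{}}"
    proof
      assume "M \<in> {M. matching E M \<and> card M = 0}"
      then have "M \<subseteq> E" "card M = 0" unfolding matching_def by auto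
      then show "M \<in> {{}}" using fE finite_subset by fastforce
    qed (simp add: matching_def)
  qed
  then show ?thesis unfolding num_matchings_def by simp
qed

lemma bound_pos:
  assumes fE: "finite E" and c2: "\<forall>e\<in>E. card e = 2"
    and big: "\<forall>j>n. num_matchings E j = 0"
    and sl: "\<forall>j. real (num_matchings E j) \<le> A * exp (s * (real j - real k))"
    and A0: "A \<ge> 0"
  shows "real (num_matchings (HE E m) K) \<le> ((real n + 1) * A) ^ m * exp (s * (real K - real m * real k))"
proof (induction m arbitrary: K)
  case 0
  show ?case by (cases "K = 0") (simp_all add: nm_empty)
next
  case (Suc m)
  define C where "C = (real n + 1) * A"
  define T where "T = A * C ^ m * exp (s * (real K - real (Suc m) * real k))"
  have T0: "T \<ge> 0" unfolding T_def C_def using A0 by simp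
  have tm: "real (num_matchings E j) * real (num_matchings (HE E m) (K - j)) \<le> (if j \<le> n then T else 0)"
    if j: "j \<le> K" for j
  proof (cases "j \<le> n")
    case False
    then show ?thesis using big by simp
  next
    case True
    have "real (num_matchings E j) * real (num_matchings (HE E m) (K - j))
          \<le> (A * exp (s * (real j - real k))) * (C ^ m * exp (s * (real (K - j) - real m * real k)))"
      using sl Suc.IH[of "K - j"] A0 unfolding C_def by (intro mult_mono) auto
    also have "\<dots> = T"
    proof -
      have "real (K - j) = real K - real j" using j by simp
      then have "s * (real j - real k) + s * (real (K - j) - real m * real k) = s * (real K - real (Suc m) * real k)"
        by (simp add: algebra_simps)
      then show ?thesis unfolding T_def by (simp add: exp_add[symmetric] algebra_simps)
    qed
    finally show ?thesis using True by simp
  qed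
  have "real (num_matchings (HE E (Suc m)) K) \<le> real (\<Sum>j\<le>K. num_matchings E j * num_matchings (HE E m) (K - j))"
    using nm_HE_step[OF fE c2] by (simp only: of_nat_le_iff)
  also have "\<dots> = (\<Sum>j\<le>K. real (num_matchings E j) * real (num_matchings (HE E m) (K - j)))" by simp
  also have "\<dots> \<le> (\<Sum>j\<le>K. (if j \<le> n then T else 0))" by (rule sum_mono) (use tm in simp)
  also have "\<dots> = T * real (card ({..K} \<inter> {j. j \<le> n}))" by (simp add: sum.If_cases)
  also have "\<dots> \<le> T * (real n + 1)"
  proof -
    have "card ({..K} \<inter> {j. j \<le> n}) \<le> card {..n}" by (rule card_mono) auto
    then have "real (card ({..K} \<inter> {j. j \<le> n})) \<le> real n + 1" by simp
    then show ?thesis using T0 by (simp add: mult_left_mono)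
  qed
  also have "\<dots> = ((real n + 1) * A) ^ Suc m * exp (s * (real K - real (Suc m) * real k))"
    unfolding T_def C_def by (simp add: algebra_simps)
  finally show ?case .
qed

lemma bound_zero:
  assumes fE: "finite E" and c2: "\<forall>e\<in>E. card e = 2"
    and zero: "\<forall>j\<ge>k. num_matchings E j = 0" and k1: "k \<ge> 1"
  shows "m * (k - 1) < K \<Longrightarrow> num_matchings (HE E m) K = 0"
proof (induction m arbitrary: K)
  case 0 then show ?case by (simp add: nm_empty)
next
  case (Suc m)
  have "num_matchings (HE E (Suc m)) K \<le> (\<Sum>j\<le>K. num_matchings E j * num_matchings (HE E m) (K - j))"
    using nm_HE_step[OF fE c2] .
  also have "\<dots> = 0"
  proof (rule sum.neutral, rule ballI)
    fix j assume j: "j \<in> {..K}"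
    show "num_matchings E j * num_matchings (HE E m) (K - j) = 0"
    proof (cases "j \<ge> k")
      case True then show ?thesis using zero by simp
    next
      case False
      then have jk: "j \<le> k - 1" by simp
      have e: "Suc m * (k - 1) = m * (k - 1) + (k - 1)" by simp
      have "j \<le> K" using j by simp
      then have "m * (k - 1) < K - j" using Suc.prems jk e by linarith
      then show ?thesis using Suc.IH by simp
    qed
  qed
  finally show ?case by simp
qed




theorem corollary3p2:
  fixes d :: nat
  assumes "d > 0"
    and "\<exists>\<epsilon> :: nat \<Rightarrow> real. \<epsilon> \<longlonglongrightarrow> 0 \<and>
      (\<forall>(V :: nat set) (E :: nat set set) (n :: nat) (k :: nat).
         simple_graph V E \<and> bipartite V E \<and> regular d V E \<and> card V = 2 * n \<and> k \<le> n \<longrightarrow>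
         ln (real (num_matchings E k)) / real (card V)
           \<ge> GG d (real k / real n) - \<epsilon> (card V))"
  shows "\<forall>(V :: nat set) (E :: nat set set) (n :: nat) (k :: nat).
         simple_graph V E \<and> bipartite V E \<and> regular d V E \<and> card V = 2 * n \<and> k \<le> n \<longrightarrow>
         ln (real (num_matchings E k)) / real (card V)
           \<ge> GG d (real k / real n) - ln (real (card V)) / real (card V)"
proof (intro allI impI)
  fix V :: "nat set" and E :: "nat set set" and n k :: nat
  assume H: "simple_graph V E \<and> bipartite V E \<and> regular d V E \<and> card V = 2 * n \<and> k \<le> n"
  obtain \<epsilon> :: "nat \<Rightarrow> real" where eps: "\<epsilon> \<longlonglongrightarrow> 0" and hyp: "\<forall>(V :: nat set) (E :: nat set set) (n :: nat) (k :: nat).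
         simple_graph V E \<and> bipartite V E \<and> regular d V E \<and> card V = 2 * n \<and> k \<le> n \<longrightarrow>
         ln (real (num_matchings E k)) / real (card V)
           \<ge> GG d (real k / real n) - \<epsilon> (card V)" using assms(2) by blast
  have sg: "simple_graph V E" and bp: "bipartite V E" and rg: "regular d V E" and cV: "card V = 2 * n"
    and kn: "k \<le> n" using H by auto
  have fV: "finite V" using sg unfolding simple_graph_def by simp
  have fE: "finite E"
  proof -
    have "E \<subseteq> Pow V" using sg unfolding simple_graph_def by blast
    then show ?thesis using fV finite_subset by blast
  qed
  have c2: "\<forall>e\<in>E. card e = 2" using sg unfolding simple_graph_def by blast
  have lnV: "ln (real (card V)) / real (card V) \<ge> 0"
    by (cases "card V = 0") (simp_all add: ln_ge_zero)
  show "ln (real (num_matchings E k)) / real (card V) \<ge> GG d (real k / real n) - ln (real (card V)) / real (card V)"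
  proof (cases "k = 0")
    case True
    have "GG d 0 = 0" unfolding GG_def xln_def by simp
    then show ?thesis using True nm_zero[OF fE] lnV by simp
  next
    case False
    then have k1: "k \<ge> 1" by simp
    then have n1: "n \<ge> 1" using kn by simp
    define a where "a j = num_matchings E j" for j
    define Lb where "Lb = ln (real ((n + 1) * a k))"
    have big: "\<forall>j>n. num_matchings E j = 0" using nm_zero_big[OF sg cV] by blast
    have lnbound: "ln (real (num_matchings (HE E m) (m * k))) \<le> real m * Lb" for m
    proof (cases "a k = 0")
      case True
      have zero: "\<forall>j\<ge>k. num_matchings E j = 0"
      proof (intro allI impI)
        fix j assume "k \<le> j"
        then obtain t where t: "j = k + t" using le_Suc_ex by blast
        have "num_matchings E (k + t) = 0"
        proof (induction t)
          case 0 then show ?case using True a_def by simp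
        next
          case (Suc t) then show ?case using nm_down[OF fE, of "k + t"] by (metis add_Suc_right not_gr0)
        qed
        then show "num_matchings E j = 0" using t by simp
      qed
      show ?thesis
      proof (cases "m = 0")
        case True then show ?thesis by (simp add: nm_empty)
      next
        case False
        have "m * (k - 1) < m * k" using False k1 by simp
        then have "num_matchings (HE E m) (m * k) = 0" using bound_zero[OF fE c2 zero k1] by blast
        then show ?thesis unfolding Lb_def using True by simp
      qed
    next
      case False
      then have ak: "a k > 0" by simp
      define s where "s = ln (real (a k)) - ln (real (a (k-1)))"
      have lc: "\<forall>j. a (j+2) * a j \<le> a (j+1)^2" unfolding a_def using logconc[OF fE c2] by blast
      have dn: "\<forall>j. a (Suc j) > 0 \<longrightarrow> a j > 0" unfolding a_def using nm_down[OF fE] by blast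
      have sl: "\<forall>j. real (num_matchings E j) \<le> real (a k) * exp (s * (real j - real k))"
        using supp_line[OF lc dn k1 ak] unfolding s_def a_def by blast
      have b: "real (num_matchings (HE E m) (m * k)) \<le> ((real n + 1) * real (a k)) ^ m"
        using bound_pos[OF fE c2 big sl, of m "m * k"] by simp
      have ak1: "real (a k) \<ge> 1" using ak by simp
      have C1: "(real n + 1) * real (a k) \<ge> 1"
      proof -
        have "(1::real) * 1 \<le> (real n + 1) * real (a k)" using ak1 by (intro mult_mono) auto
        then show ?thesis by simp
      qed
      have Lbe: "Lb = ln ((real n + 1) * real (a k))" unfolding Lb_def by (simp add: algebra_simps)
      show ?thesis
      proof (cases "num_matchings (HE E m) (m * k) = 0")
        case True
        then show ?thesis using Lbe C1 by simp
      next
        case False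
        then have "ln (real (num_matchings (HE E m) (m * k))) \<le> ln (((real n + 1) * real (a k)) ^ m)"
          using b by (subst ln_le_cancel_iff) auto
        also have "\<dots> = real m * Lb" using Lbe C1 by (simp add: ln_realpow)
        finally show ?thesis .
      qed
    qed
    have key: "GG d (real k / real n) - \<epsilon> (2 * (m * n)) \<le> Lb / (2 * real n)" if m1: "m \<ge> 1" for m
    proof -
      have "simple_graph (HV V m) (HE E m)" using H_simple[OF sg] .
      moreover have "bipartite (HV V m) (HE E m)" using H_bip[OF bp] .
      moreover have "regular d (HV V m) (HE E m)" using H_regular[OF rg sg] .
      moreover have cH: "card (HV V m) = 2 * (m * n)" using HV_card[OF fV, of m] cV by simp
      moreover have "m * k \<le> m * n" using kn by simp
      ultimately have h: "ln (real (num_matchings (HE E m) (m * k))) / real (card (HV V m))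
           \<ge> GG d (real (m * k) / real (m * n)) - \<epsilon> (card (HV V m))"
        using hyp by blast
      have q: "real (m * k) / real (m * n) = real k / real n" using m1 by simp
      have pos: "real (card (HV V m)) > 0" using cH m1 n1 by simp
      have "ln (real (num_matchings (HE E m) (m * k))) / real (card (HV V m)) \<le> (real m * Lb) / real (card (HV V m))"
        using lnbound[of m] pos by (simp add: divide_right_mono)
      also have "\<dots> = Lb / (2 * real n)" using cH m1 by simp
      finally show ?thesis using h q cH by simp
    qed
    have sm: "strict_mono (\<lambda>m::nat. 2 * (m * n))" using n1 by (intro strict_monoI) simp
    have "(\<lambda>m. \<epsilon> (2 * (m * n))) \<longlonglongrightarrow> 0" using LIMSEQ_subseq_LIMSEQ[OF eps sm, unfolded Fun.comp_def] by simp
    then have "(\<lambda>m. GG d (real k / real n) - \<epsilon> (2 * (m * n))) \<longlonglongrightarrow> GG d (real k / real n) - 0"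
      by (intro tendsto_intros)
    then have lim: "(\<lambda>m. GG d (real k / real n) - \<epsilon> (2 * (m * n))) \<longlonglongrightarrow> GG d (real k / real n)"
      by simp
    have GGle: "GG d (real k / real n) \<le> Lb / (2 * real n)"
      by (rule LIMSEQ_le_const2[OF lim]) (use key in blast)
    have npos: "real n > 0" using n1 by simp
    have cVr: "real (card V) = 2 * real n" using cV by simp
    show ?thesis
    proof (cases "a k = 0")
      case True
      then have "Lb = 0" unfolding Lb_def by simp
      then show ?thesis using GGle True lnV unfolding a_def by simp
    next
      case False
      have "real ((n + 1) * a k) = (real n + 1) * real (a k)" by (simp add: algebra_simps)
      then have "Lb = ln ((real n + 1) * real (a k))" unfolding Lb_def by simp
      also have "\<dots> = ln (real n + 1) + ln (real (a k))" using False by (subst ln_mult) auto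
      finally have "Lb = ln (real n + 1) + ln (real (a k))" .
      moreover have "ln (real n + 1) \<le> ln (2 * real n)" using n1 by simp
      ultimately have "GG d (real k / real n) \<le> (ln (2 * real n) + ln (real (a k))) / (2 * real n)"
        using GGle npos by (smt (verit) divide_right_mono)
      then have "GG d (real k / real n) - ln (2 * real n) / (2 * real n) \<le> ln (real (a k)) / (2 * real n)"
        by (simp add: add_divide_distrib)
      then show ?thesis using cVr unfolding a_def by simp
    qed
  qed
qed


end
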